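(* Let $X$ be as in the standing setting with skeleton $X_1,\dots,X_k$. Let $x,y\in X$ lie in no $\operatorname{span}X_l$, and suppose $x\in\operatorname{pos}\{x_i,x_j\}$ and $y\in\operatorname{pos}\{y_i,y_j\}$ for some $i\neq j$, $x_i,y_i\in X_i$, $x_j,y_j\in X_j$. If $|X_i|>2$, then $x_i=y_i$.
   Context: Standing setting: $X\subset\mathbb R^n\setminus\{0\}$ is a finite set such that $0$ lies in the interior of $\operatorname{conv}X$, no element of $X$ is a positive multiple of another, and every $n+1$ points of $X$ are in good position. A finite set $A$ is in conical position if $0\notin\operatorname{conv}A$ and no point of $A$ lies in the positive hull (set of nonnegative linear combinations, denoted $\operatorname{pos}$) of the other points; it is in good position otherwise. A skeleton of $X$ is a collection of pairwise disjoint subsets $X_1,\dots,X_k\subseteq X$ such that each $X_i$ is the vertex set of a simplex whose relative interior contains $0$ and $\mathbb R^n=\operatorname{span}X_1\oplus\cdots\oplus\operatorname{span}X_k$. *)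

theory Defs
  imports "HOL-Analysis.Analysis"
begin

definition pos :: "'a::real_vector set \<Rightarrow> 'a set" where
  "pos A = {(\<Sum>a\<in>B. c a *\<^sub>R a) | B c. finite B \<and> B \<subseteq> A \<and> (\<forall>a\<in>B. c a \<ge> 0)}"

definition conical_position :: "'a::real_vector set \<Rightarrow> bool" where
  "conical_position A \<longleftrightarrow> 0 \<notin> convex hull A \<and> (\<forall>a\<in>A. a \<notin> pos (A - {a}))"

definition good_position :: "'a::real_vector set \<Rightarrow> bool" where
  "good_position A \<longleftrightarrow> \<not> conical_position A"

definition standing_setting :: "'a::euclidean_space set \<Rightarrow> bool" where
  "standing_setting X \<longleftrightarrow>
     finite X \<and> 0 \<notin> X \<and> 0 \<in> interior (convex hull X) \<and>
     (\<forall>x\<in>X. \<forall>y\<in>X. \<forall>c::real. x \<noteq> y \<and> c > 0 \<longrightarrow> y \<noteq> c *\<^sub>R x) \<and>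
     (\<forall>A. A \<subseteq> X \<and> card A = DIM('a) + 1 \<longrightarrow> good_position A)"

definition direct_sum_UNIV :: "'i set \<Rightarrow> ('i \<Rightarrow> 'a::real_vector set) \<Rightarrow> bool" where
  "direct_sum_UNIV I V \<longleftrightarrow>
     (\<forall>v. \<exists>!f. (\<forall>i\<in>I. f i \<in> V i) \<and> (\<forall>i. i \<notin> I \<longrightarrow> f i = 0) \<and> v = sum f I)"

definition skeleton :: "'a::euclidean_space set \<Rightarrow> nat \<Rightarrow> (nat \<Rightarrow> 'a set) \<Rightarrow> bool" where
  "skeleton X k Xs \<longleftrightarrow>
     (\<forall>i\<in>{1..k}. Xs i \<subseteq> X) \<and>
     (\<forall>i\<in>{1..k}. \<forall>j\<in>{1..k}. i \<noteq> j \<longrightarrow> Xs i \<inter> Xs j = {}) \<and>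
     (\<forall>i\<in>{1..k}. \<not> affine_dependent (Xs i) \<and> 0 \<in> rel_interior (convex hull (Xs i))) \<and>
     direct_sum_UNIV {1..k} (\<lambda>i. span (Xs i))"

end

theory Submission
  imports Defs
begin


lemma indep_zero:
  fixes S :: "'a::real_vector set"
  assumes "independent S" "finite S" "(\<Sum>v\<in>S. u v *\<^sub>R v) = 0" "v \<in> S"
  shows "u v = 0"
  using assms dependent_finite by blast

lemma pos_rep:
  fixes p :: "'a::real_vector"
  assumes "p \<in> pos S" "S \<subseteq> A" "finite A"
  shows "\<exists>c. (\<forall>v\<in>A. 0 \<le> c v) \<and> (\<forall>v\<in>A-S. c v = 0) \<and> p = (\<Sum>v\<in>A. c v *\<^sub>R v)"
proof -
  obtain B c where B: "p = (\<Sum>a\<in>B. c a *\<^sub>R a)" "finite B" "B \<subseteq> S" "\<forall>a\<in>B. c a \<ge> 0"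
    using assms(1) unfolding pos_def by blast
  define c' where "c' v = (if v \<in> B then c v else 0)" for v
  have "(\<Sum>v\<in>A. c' v *\<^sub>R v) = (\<Sum>v\<in>A. if v \<in> B then c v *\<^sub>R v else 0)"
    by (rule sum.cong) (auto simp: c'_def)
  also have "\<dots> = (\<Sum>v\<in>A \<inter> B. c v *\<^sub>R v)"
    using assms(3) by (simp add: sum.inter_restrict)
  also have "A \<inter> B = B" using B assms(2) by blast
  finally have "p = (\<Sum>v\<in>A. c' v *\<^sub>R v)" using B by simp
  moreover have "\<forall>v\<in>A. 0 \<le> c' v" using B by (auto simp: c'_def)
  moreover have "\<forall>v\<in>A-S. c' v = 0" using B by (auto simp: c'_def)
  ultimately show ?thesis by blast
qed

lemma comb_lemma:
  fixes x :: "'a::real_vector"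
  assumes "finite B" "independent B" "x \<notin> B" "x = (\<Sum>b\<in>B. \<mu> b *\<^sub>R b)"
    and "(\<Sum>v\<in>insert x B. w v *\<^sub>R v) = 0" "b \<in> B"
  shows "w b + w x * \<mu> b = 0"
proof -
  have "(\<Sum>v\<in>insert x B. w v *\<^sub>R v) = w x *\<^sub>R x + (\<Sum>v\<in>B. w v *\<^sub>R v)"
    using assms by simp
  also have "w x *\<^sub>R x = (\<Sum>v\<in>B. (w x * \<mu> v) *\<^sub>R v)"
    using assms(4) by (simp add: scaleR_sum_right)
  finally have "(\<Sum>v\<in>B. (w v + w x * \<mu> v) *\<^sub>R v) = 0"
    using assms(5) by (simp add: scaleR_add_left sum.distrib add.commute)
  then show ?thesis using indep_zero[OF assms(2,1), where u="\<lambda>v. w v + w x * \<mu> v"] assms(6) by blast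
qed

lemma conical_core:
  fixes x :: "'a::real_vector"
  assumes fin: "finite B" and ind: "independent B" and xB: "x \<notin> B"
    and rep: "x = (\<Sum>b\<in>B. \<mu> b *\<^sub>R b)"
    and b12: "b1 \<in> B" "b2 \<in> B" "b1 \<noteq> b2" "\<mu> b1 > 0" "\<mu> b2 > 0"
    and b3: "b3 \<in> B" "\<mu> b3 < 0"
  shows "conical_position (insert x B)"
  unfolding conical_position_def
proof (intro conjI ballI)
  note C = comb_lemma[OF fin ind xB rep]
  have finA: "finite (insert x B)" using fin by simp
  show "0 \<notin> convex hull (insert x B)"
  proof
    assume "0 \<in> convex hull (insert x B)"
    then obtain u where u: "\<forall>v\<in>insert x B. 0 \<le> u v" "sum u (insert x B) = 1"
      "(\<Sum>v\<in>insert x B. u v *\<^sub>R v) = 0"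
      unfolding convex_hull_finite[OF finA] by blast
    have "u b1 + u x * \<mu> b1 = 0" using C[OF u(3) b12(1)] .
    moreover have "u b1 \<ge> 0" "u x \<ge> 0" using u b12 by auto
    ultimately have ux: "u x = 0"
      using b12(4) by (smt (verit) mult_pos_pos)
    have "\<forall>b\<in>B. u b = 0" using C[OF u(3)] ux by simp
    then have "sum u (insert x B) = 0" using ux by (simp add: fin xB)
    then show False using u(2) by simp
  qed
next
  fix a assume a: "a \<in> insert x B"
  have finA: "finite (insert x B)" using fin by simp
  note C = comb_lemma[OF fin ind xB rep]
  show "a \<notin> pos (insert x B - {a})"
  proof
    assume "a \<in> pos (insert x B - {a})"
    then obtain c where c: "\<forall>v\<in>insert x B. 0 \<le> c v" "\<forall>v\<in>insert x B - (insert x B - {a}). c v = 0"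
      "a = (\<Sum>v\<in>insert x B. c v *\<^sub>R v)"
      using pos_rep[OF _ _ finA, of a "insert x B - {a}"] by blast
    define w where "w v = c v - (if v = a then 1 else 0)" for v
    have "(\<Sum>v\<in>insert x B. w v *\<^sub>R v) = (\<Sum>v\<in>insert x B. c v *\<^sub>R v) - (\<Sum>v\<in>insert x B. (if v = a then 1 else 0) *\<^sub>R v)"
      unfolding w_def by (simp add: scaleR_diff_left sum_subtractf)
    also have "(\<Sum>v\<in>insert x B. (if v = a then 1 else 0) *\<^sub>R v) = (\<Sum>v\<in>insert x B. if v = a then v else 0)"
      by (rule sum.cong) auto
    also have "\<dots> = a" using a finA by (simp add: sum.delta')
    finally have w0: "(\<Sum>v\<in>insert x B. w v *\<^sub>R v) = 0" using c(3) by (metis diff_self)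
    have ca: "c a = 0" using c(2) a by auto
    show False
    proof (cases "a = x")
      case True
      have "w b3 + w x * \<mu> b3 = 0" using C[OF w0 b3(1)] .
      moreover have "w b3 = c b3" "w x = -1" using True xB b3 ca by (auto simp: w_def)
      moreover have "c b3 \<ge> 0" using c(1) b3 by auto
      ultimately show False using b3(2) by simp
    next
      case False
      then have aB: "a \<in> B" using a by simp
      obtain b' where b': "b' \<in> B" "b' \<noteq> a" "\<mu> b' > 0"
        using b12 by (cases "b1 = a") auto
      have "w b' + w x * \<mu> b' = 0" using C[OF w0 b'(1)] .
      moreover have "w b' = c b'" "w x = c x" using b' False by (auto simp: w_def)
      moreover have "c b' \<ge> 0" "c x \<ge> 0" using c(1) b' by auto
      ultimately have cx: "c x = 0" using b'(3) by (smt (verit) mult_pos_pos)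
      have "w a + w x * \<mu> a = 0" using C[OF w0 aB] .
      moreover have "w a = -1" using ca by (simp add: w_def)
      moreover have "w x = 0" using cx False by (simp add: w_def)
      ultimately show False by simp
    qed
  qed
qed



lemma direct_split:
  fixes Xs :: "'i \<Rightarrow> 'a::real_vector set"
  assumes ds: "direct_sum_UNIV I (\<lambda>l. span (Xs l))" and ij: "i \<in> I" "j \<in> I" "i \<noteq> j"
    and u: "u \<in> span (Xs i)" and w: "w \<in> span (Xs j)" and s: "u + w = 0" and finI: "finite I"
  shows "u = 0 \<and> w = 0"
proof -
  obtain f where f: "\<And>g. (\<forall>l\<in>I. g l \<in> span (Xs l)) \<and> (\<forall>l. l \<notin> I \<longrightarrow> g l = 0) \<and> (0::'a) = sum g I \<Longrightarrow> g = f"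
    using ds unfolding direct_sum_UNIV_def by metis
  define g where "g l = (if l = i then u else if l = j then w else 0)" for l
  have "sum g I = sum g {i, j}"
    by (rule sum.mono_neutral_right) (use ij finI in \<open>auto simp: g_def\<close>)
  also have "\<dots> = u + w" using ij by (simp add: g_def)
  finally have "sum g I = 0" using s by simp
  then have "g = f" using ij u w by (intro f) (auto simp: g_def span_zero)
  moreover have "(\<lambda>l. 0::'a) = f" by (intro f) (auto simp: span_zero)
  ultimately have "g = (\<lambda>l. 0)" by simp
  then have "g i = 0" "g j = 0" by (auto dest: fun_cong)
  then show ?thesis using ij by (simp add: g_def split: if_splits)
qed

lemma simplex_pos:
  fixes S :: "'a::euclidean_space set"
  assumes "\<not> affine_dependent S" "0 \<in> rel_interior (convex hull S)"
  obtains lam where "\<forall>v\<in>S. 0 < lam v" "sum lam S = 1" "(\<Sum>v\<in>S. lam v *\<^sub>R v) = 0"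
  using assms rel_interior_convex_hull_explicit[OF assms(1)] by auto

lemma simplex_indep:
  fixes S :: "'a::euclidean_space set"
  assumes aff: "\<not> affine_dependent S" and rel: "0 \<in> rel_interior (convex hull S)" and a: "a \<in> S"
  shows "independent (S - {a})"
proof
  assume dep: "dependent (S - {a})"
  have fin: "finite S" using aff_independent_finite[OF aff] .
  obtain lam where l: "\<forall>v\<in>S. 0 < lam v" "sum lam S = 1" "(\<Sum>v\<in>S. lam v *\<^sub>R v) = 0"
    using simplex_pos[OF aff rel] by blast
  obtain u v0 where u: "v0 \<in> S - {a}" "u v0 \<noteq> 0" "(\<Sum>v\<in>S - {a}. u v *\<^sub>R v) = 0"
    using dep dependent_finite[of "S - {a}"] fin by auto
  define t where "t = sum u (S - {a})"
  define u' where "u' v = (if v = a then 0 else u v)" for v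
  define U where "U v = u' v - t * lam v" for v
  have su': "sum u' S = t"
    using sum.remove[OF fin a, of u'] by (simp add: u'_def t_def)
  have sv': "(\<Sum>v\<in>S. u' v *\<^sub>R v) = 0"
    using sum.remove[OF fin a, of "\<lambda>v. u' v *\<^sub>R v"] u(3) by (simp add: u'_def)
  have "sum U S = 0"
    unfolding U_def using su' l(2) by (simp add: sum_subtractf sum_distrib_left[symmetric])
  moreover have "(\<Sum>v\<in>S. U v *\<^sub>R v) = 0"
    unfolding U_def using sv' l(3)
    by (simp add: scaleR_diff_left sum_subtractf scaleR_sum_right[symmetric] flip: scaleR_scaleR)
  moreover have "\<exists>v\<in>S. U v \<noteq> 0"
  proof (cases "t = 0")
    case True then show ?thesis using u by (intro bexI[of _ v0]) (auto simp: U_def u'_def)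
  next
    case False then show ?thesis using l(1) a by (intro bexI[of _ a]) (auto simp: U_def u'_def)
  qed
  ultimately have "affine_dependent S" using affine_dependent_explicit_finite[OF fin] by blast
  then show False using aff by simp
qed

lemma span_full:
  fixes X :: "'a::euclidean_space set"
  assumes "0 \<in> interior (convex hull X)"
  shows "span X = UNIV"
proof -
  have "interior (span X) \<noteq> {}"
    using assms interior_mono[OF convex_hull_subset_span[of X]] by blast
  then have "\<not> dim (span X) < DIM('a)" using empty_interior_lowdim by blast
  then have "dim X = DIM('a)" using dim_subset_UNIV[of X] by simp
  then show ?thesis using dim_eq_full by blast
qed



lemma core_notin:
  fixes x :: "'a::real_vector"
  assumes fin: "finite B" and ind: "independent B"
    and rep: "x = (\<Sum>b\<in>B. \<mu> b *\<^sub>R b)" and b3: "b3 \<in> B" "\<mu> b3 < 0"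
  shows "x \<notin> B"
proof
  assume xB: "x \<in> B"
  have "(\<Sum>b\<in>B. (\<mu> b - (if b = x then 1 else 0)) *\<^sub>R b) = (\<Sum>b\<in>B. \<mu> b *\<^sub>R b) - (\<Sum>b\<in>B. (if b = x then 1 else 0) *\<^sub>R b)"
    by (simp add: scaleR_diff_left sum_subtractf)
  also have "(\<Sum>b\<in>B. (if b = x then 1 else 0) *\<^sub>R b) = (\<Sum>b\<in>B. if b = x then b else 0)"
    by (rule sum.cong) auto
  also have "\<dots> = x" using xB fin by (simp add: sum.delta')
  finally have "(\<Sum>b\<in>B. (\<mu> b - (if b = x then 1 else 0)) *\<^sub>R b) = 0" using rep by (metis diff_self)
  from indep_zero[OF ind fin this b3(1)] have "\<mu> b3 = (if b3 = x then 1 else 0)" by simp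
  then show False using b3(2) by (simp split: if_splits)
qed

lemma pos2_strict:
  fixes p :: "'a::real_vector"
  assumes "p \<in> pos {u, v}" "u \<noteq> v" "p \<notin> span U" "p \<notin> span V" "u \<in> U" "v \<in> V"
  obtains \<alpha> \<beta> where "\<alpha> > 0" "\<beta> > 0" "p = \<alpha> *\<^sub>R u + \<beta> *\<^sub>R v"
proof -
  obtain c where c: "\<forall>w\<in>{u,v}. 0 \<le> c w" "p = (\<Sum>w\<in>{u,v}. c w *\<^sub>R w)"
    using pos_rep[OF assms(1) subset_refl] by auto
  have p: "p = c u *\<^sub>R u + c v *\<^sub>R v" using c(2) assms(2) by simp
  have "c u \<noteq> 0"
  proof
    assume "c u = 0"
    then have "p = c v *\<^sub>R v" using p by simp
    then have "p \<in> span V" by (simp add: span_scale span_base assms(6))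
    then show False using assms(4) by simp
  qed
  moreover have "c v \<noteq> 0"
  proof
    assume "c v = 0"
    then have "p = c u *\<^sub>R u" using p by simp
    then have "p \<in> span U" by (simp add: span_scale span_base assms(5))
    then show False using assms(3) by simp
  qed
  ultimately show ?thesis using that c(1) p by (metis insert_iff order_le_less)
qed

lemma finish:
  fixes X :: "'a::euclidean_space set"
  assumes spanX: "span X = UNIV" and LX: "L \<subseteq> X" and indL: "independent L"
    and xX: "x \<in> X" and t: "t > 0" and rep: "t *\<^sub>R x = (\<Sum>v\<in>L. \<mu> v *\<^sub>R v)"
    and b12: "b1 \<in> L" "b2 \<in> L" "b1 \<noteq> b2" "\<mu> b1 > 0" "\<mu> b2 > 0"
    and b3: "b3 \<in> L" "\<mu> b3 < 0"
  shows "\<exists>A \<subseteq> X. card A = DIM('a) + 1 \<and> conical_position A"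
proof -
  obtain B where B: "L \<subseteq> B" "B \<subseteq> X" "independent B" "X \<subseteq> span B"
    using maximal_independent_subset_extend[OF LX indL] by blast
  have finB: "finite B" using B(3) finiteI_independent by blast
  have finL: "finite L" using indL finiteI_independent by blast
  have "span B = UNIV" using B(4) spanX span_mono[OF B(4)] by (auto simp: span_span)
  then have cardB: "card B = DIM('a)"
    using dim_eq_full[of B] dim_eq_card_independent[OF B(3)] by simp
  define \<mu>' where "\<mu>' v = (if v \<in> L then \<mu> v / t else 0)" for v
  have "(\<Sum>v\<in>B. \<mu>' v *\<^sub>R v) = (\<Sum>v\<in>L. \<mu>' v *\<^sub>R v)"
    by (rule sum.mono_neutral_right[OF finB B(1)]) (auto simp: \<mu>'_def)
  also have "\<dots> = (\<Sum>v\<in>L. (1/t) *\<^sub>R (\<mu> v *\<^sub>R v))"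
    by (rule sum.cong) (auto simp: \<mu>'_def)
  also have "\<dots> = (1/t) *\<^sub>R (t *\<^sub>R x)" by (simp add: rep scaleR_sum_right)
  also have "\<dots> = x" using t by simp
  finally have rep': "x = (\<Sum>v\<in>B. \<mu>' v *\<^sub>R v)" by simp
  have m1: "\<mu>' b1 > 0" "\<mu>' b2 > 0" "\<mu>' b3 < 0" using b12 b3 t by (auto simp: \<mu>'_def divide_neg_pos)
  have xB: "x \<notin> B" using core_notin[OF finB B(3) rep' _ m1(3)] b3 B(1) by blast
  have "conical_position (insert x B)"
    using conical_core[OF finB B(3) xB rep', of b1 b2 b3] b12 b3 B(1) m1 by blast
  moreover have "card (insert x B) = DIM('a) + 1" using xB finB cardB by simp
  moreover have "insert x B \<subseteq> X" using xX B(2) by simp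
  ultimately show ?thesis by blast
qed

lemma indep_L:
  fixes xi yi z y :: "'a::real_vector"
  assumes split: "\<And>p q. p \<in> span Si \<Longrightarrow> q \<in> span Sj \<Longrightarrow> p + q = 0 \<Longrightarrow> p = 0 \<and> q = 0"
    and ind2: "independent {xi, yi}" and ne: "xi \<noteq> yi"
    and xiS: "xi \<in> span Si" and yiS: "yi \<in> span Si"
    and zS: "z \<in> span Sj" and RS: "R \<subseteq> span Sj" and finR: "finite R"
    and indQ: "independent (insert z R)" and zR: "z \<notin> R"
    and y: "y = c *\<^sub>R yi + d *\<^sub>R z" and d: "d \<noteq> 0"
    and dist: "y \<notin> insert xi (insert yi R)" "xi \<notin> R" "yi \<notin> R"
  shows "independent (insert y (insert xi (insert yi R)))"
proof -
  let ?L = "insert y (insert xi (insert yi R))"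
  have finL: "finite ?L" using finR by simp
  have "\<forall>u. (\<Sum>v\<in>?L. u v *\<^sub>R v) = 0 \<longrightarrow> (\<forall>v\<in>?L. u v = 0)"
  proof (intro allI impI)
    fix u assume s: "(\<Sum>v\<in>?L. u v *\<^sub>R v) = 0"
    define Pi where "Pi = (u y * c) *\<^sub>R yi + u xi *\<^sub>R xi + u yi *\<^sub>R yi"
    define Pj where "Pj = (u y * d) *\<^sub>R z + (\<Sum>v\<in>R. u v *\<^sub>R v)"
    have "(\<Sum>v\<in>?L. u v *\<^sub>R v) = u y *\<^sub>R y + u xi *\<^sub>R xi + u yi *\<^sub>R yi + (\<Sum>v\<in>R. u v *\<^sub>R v)"
      using dist ne finR by (simp add: algebra_simps)
    also have "\<dots> = Pi + Pj" unfolding Pi_def Pj_def y by (simp add: algebra_simps)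
    finally have "Pi + Pj = 0" using s by simp
    moreover have "Pi \<in> span Si" unfolding Pi_def
      by (intro span_add span_scale xiS yiS)
    moreover have "Pj \<in> span Sj" unfolding Pj_def
      using RS by (intro span_add span_scale zS span_sum) auto
    ultimately have P0: "Pi = 0" "Pj = 0" using split by blast+
    define u' where "u' v = (if v = z then u y * d else u v)" for v
    have "(\<Sum>v\<in>insert z R. u' v *\<^sub>R v) = (u y * d) *\<^sub>R z + (\<Sum>v\<in>R. u' v *\<^sub>R v)"
      using zR finR by (simp add: u'_def)
    also have "(\<Sum>v\<in>R. u' v *\<^sub>R v) = (\<Sum>v\<in>R. u v *\<^sub>R v)"
      by (rule sum.cong) (use zR in \<open>auto simp: u'_def\<close>)
    finally have "(\<Sum>v\<in>insert z R. u' v *\<^sub>R v) = 0" using P0(2) by (simp add: Pj_def)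
    note Z = indep_zero[OF indQ _ this]
    have "u' z = 0" using Z finR by simp
    then have uy: "u y = 0" using d by (simp add: u'_def)
    have uR: "\<forall>v\<in>R. u v = 0"
    proof
      fix v assume "v \<in> R"
      then have "u' v = 0" using Z finR by simp
      then show "u v = 0" using \<open>v \<in> R\<close> zR by (auto simp: u'_def split: if_splits)
    qed
    have "(\<Sum>v\<in>{xi,yi}. u v *\<^sub>R v) = 0" using P0(1) uy ne by (simp add: Pi_def)
    note W = indep_zero[OF ind2 _ this]
    have "u xi = 0" "u yi = 0" using W by auto
    then show "\<forall>v\<in>?L. u v = 0" using uy uR by auto
  qed
  then show ?thesis using dependent_finite[OF finL] by blast
qed



theorem proposition5p3:
  fixes X :: "'a::euclidean_space set" and Xs :: "nat \<Rightarrow> 'a set" and k :: nat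
    and x y xi xj yi yj :: 'a and i j :: nat
  assumes "standing_setting X"
    and "skeleton X k Xs"
    and "x \<in> X" and "y \<in> X"
    and "\<forall>l\<in>{1..k}. x \<notin> span (Xs l)"
    and "\<forall>l\<in>{1..k}. y \<notin> span (Xs l)"
    and "i \<in> {1..k}" and "j \<in> {1..k}" and "i \<noteq> j"
    and "xi \<in> Xs i" and "yi \<in> Xs i" and "xj \<in> Xs j" and "yj \<in> Xs j"
    and "x \<in> pos {xi, xj}" and "y \<in> pos {yi, yj}"
    and "card (Xs i) > 2"
  shows "xi = yi"
proof (rule ccontr)
  assume ne: "xi \<noteq> yi"
  have ss1: "0 \<notin> X" "0 \<in> interior (convex hull X)"
    and good0: "\<forall>A. A \<subseteq> X \<and> card A = DIM('a) + 1 \<longrightarrow> good_position A"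
    using assms(1) unfolding standing_setting_def by blast+
  have sk1: "\<forall>l\<in>{1..k}. Xs l \<subseteq> X"
    and sk2: "\<forall>l\<in>{1..k}. \<forall>m\<in>{1..k}. l \<noteq> m \<longrightarrow> Xs l \<inter> Xs m = {}"
    and sk3: "\<forall>l\<in>{1..k}. \<not> affine_dependent (Xs l) \<and> 0 \<in> rel_interior (convex hull (Xs l))"
    and sk4: "direct_sum_UNIV {1..k} (\<lambda>l. span (Xs l))"
    using assms(2) unfolding skeleton_def by blast+
  have spanX: "span X = UNIV" using span_full ss1(2) by blast
  have good: "\<And>A. A \<subseteq> X \<Longrightarrow> card A = DIM('a) + 1 \<Longrightarrow> good_position A" using good0 by blast
  have disj: "Xs i \<inter> Xs j = {}" using sk2 assms(7-9) by blast
  have affi: "\<not> affine_dependent (Xs i)" "0 \<in> rel_interior (convex hull (Xs i))" using sk3 assms(7) by blast+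
  have affj: "\<not> affine_dependent (Xs j)" "0 \<in> rel_interior (convex hull (Xs j))" using sk3 assms(8) by blast+
  have XjX: "Xs j \<subseteq> X" using sk1 assms(8) by blast
  have XiX: "Xs i \<subseteq> X" using sk1 assms(7) by blast
  have split: "\<And>p q. p \<in> span (Xs i) \<Longrightarrow> q \<in> span (Xs j) \<Longrightarrow> p + q = 0 \<Longrightarrow> p = 0 \<and> q = 0"
    using direct_split[OF sk4 assms(7-9)] by simp
  have xns: "x \<notin> span (Xs i)" "x \<notin> span (Xs j)" using assms(5,7,8) by auto
  have yns: "y \<notin> span (Xs i)" "y \<notin> span (Xs j)" using assms(6,7,8) by auto
  have xixj: "xi \<noteq> xj" "yi \<noteq> yj" using disj assms(10-13) by auto
  obtain a b where ab: "a > 0" "b > 0" "x = a *\<^sub>R xi + b *\<^sub>R xj"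
    using pos2_strict[OF assms(14) xixj(1) xns assms(10,12)] by blast
  obtain c d where cd: "c > 0" "d > 0" "y = c *\<^sub>R yi + d *\<^sub>R yj"
    using pos2_strict[OF assms(15) xixj(2) yns assms(11,13)] by blast
  have finXi: "finite (Xs i)" using assms(16) card.infinite by fastforce
  obtain w where w: "w \<in> Xs i" "w \<noteq> xi" "w \<noteq> yi"
  proof -
    have "\<not> Xs i \<subseteq> {xi, yi}"
    proof
      assume "Xs i \<subseteq> {xi, yi}"
      then have "card (Xs i) \<le> card {xi, yi}" by (intro card_mono) auto
      also have "\<dots> \<le> 2" by (simp add: card_insert_le_m1)
      finally show False using assms(16) by simp
    qed
    then obtain w0 where "w0 \<in> Xs i" "w0 \<notin> {xi, yi}" by blast
    then show ?thesis using that by simp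
  qed
  have ind2: "independent {xi, yi}"
  proof (rule independent_mono[OF simplex_indep[OF affi w(1)]])
    show "{xi, yi} \<subseteq> Xs i - {w}" using w assms(10,11) by auto
  qed
  have sxi: "xi \<in> span (Xs i)" "yi \<in> span (Xs i)" using assms(10,11) span_base by auto
  have sxj: "xj \<in> span (Xs j)" "yj \<in> span (Xs j)" using assms(12,13) span_base by auto
  have yxi: "y \<noteq> xi" "y \<noteq> yi" using yns sxi by auto
  show False
  proof (cases "xj = yj")
    case True
    have xj0: "xj \<noteq> 0" using ss1(1) assms(12) XjX by blast
    have indL: "independent (insert y (insert xi (insert yi {})))"
      by (rule indep_L[OF split ind2 ne sxi sxj(1), where R="{}" and c=c and d=d]) (use xj0 cd True yxi ne in auto)
    define \<mu> where "\<mu> v = (if v = y then b else if v = xi then d * a else - (b * c))" for v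
    have "d *\<^sub>R x = (\<Sum>v\<in>{y, xi, yi}. \<mu> v *\<^sub>R v)"
      using yxi ne by (simp add: \<mu>_def ab(3) cd(3) True algebra_simps)
    then have "\<exists>A \<subseteq> X. card A = DIM('a) + 1 \<and> conical_position A"
      by (intro finish[OF spanX _ indL assms(3) cd(2), of \<mu> y xi yi])
         (use XiX assms(4,10,11) yxi ne ab cd in \<open>auto simp: \<mu>_def\<close>)
    then show False using good unfolding good_position_def by blast
  next
    case False
    obtain lam where lam: "\<forall>v\<in>Xs j. 0 < lam v" "(\<Sum>v\<in>Xs j. lam v *\<^sub>R v) = 0"
      using simplex_pos[OF affj] by blast
    have finXj: "finite (Xs j)" using aff_independent_finite[OF affj(1)] .
    define R where "R = Xs j - {xj, yj}"
    have finR: "finite R" using finXj by (simp add: R_def)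
    have XjR: "Xs j = insert xj (insert yj R)" using assms(12,13) by (auto simp: R_def)
    have nR: "xj \<notin> R" "yj \<notin> R" "xi \<notin> R" "yi \<notin> R" "y \<notin> R"
      using disj assms(10,11) yns(2) span_base by (auto simp: R_def)
    define SR where "SR = (\<Sum>v\<in>R. lam v *\<^sub>R v)"
    have e: "lam xj *\<^sub>R xj = - (lam yj *\<^sub>R yj) - SR"
    proof -
      have "(\<Sum>v\<in>Xs j. lam v *\<^sub>R v) = lam xj *\<^sub>R xj + lam yj *\<^sub>R yj + SR"
        unfolding XjR SR_def using nR False finR by simp
      then show ?thesis using lam(2) by (simp add: algebra_simps eq_neg_iff_add_eq_0)
    qed
    have RS: "R \<subseteq> span (Xs j)" using span_superset by (auto simp: R_def)
    have "Xs j - {xj} = insert yj R" using XjR nR False by auto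
    then have indQ: "independent (insert yj R)"
      using simplex_indep[OF affj assms(12)] by simp
    have indL: "independent (insert y (insert xi (insert yi R)))"
      by (rule indep_L[OF split ind2 ne sxi sxj(2) RS finR indQ nR(2) cd(3)]) (use cd yxi nR ne in auto)
    define \<mu> where "\<mu> v = (if v = y then - (b * lam yj) else if v = xi then lam xj * d * a
       else if v = yi then b * lam yj * c else - (b * d * lam v))" for v
    have lp: "lam xj > 0" "lam yj > 0" using lam(1) assms(12,13) by auto
    have s1: "(\<Sum>v\<in>insert y (insert xi (insert yi R)). \<mu> v *\<^sub>R v)
        = \<mu> y *\<^sub>R y + \<mu> xi *\<^sub>R xi + \<mu> yi *\<^sub>R yi + (\<Sum>v\<in>R. \<mu> v *\<^sub>R v)"
      using nR yxi ne finR by (simp add: algebra_simps)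
    have s2: "(\<Sum>v\<in>R. \<mu> v *\<^sub>R v) = (- (b * d)) *\<^sub>R SR"
    proof -
      have "(\<Sum>v\<in>R. \<mu> v *\<^sub>R v) = (\<Sum>v\<in>R. (- (b * d)) *\<^sub>R (lam v *\<^sub>R v))"
        by (rule sum.cong) (use nR in \<open>auto simp: \<mu>_def\<close>)
      then show ?thesis by (simp add: SR_def scaleR_sum_right)
    qed
    have lhs: "(lam xj * d) *\<^sub>R x = (lam xj * d * a) *\<^sub>R xi + (b * d) *\<^sub>R (lam xj *\<^sub>R xj)"
      by (simp add: ab(3) algebra_simps)
    have rep: "(lam xj * d) *\<^sub>R x = (\<Sum>v\<in>insert y (insert xi (insert yi R)). \<mu> v *\<^sub>R v)"
      unfolding s1 s2 lhs e using yxi ne by (simp add: \<mu>_def cd(3) algebra_simps)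
    have "\<exists>A \<subseteq> X. card A = DIM('a) + 1 \<and> conical_position A"
      by (intro finish[OF spanX _ indL assms(3) _ rep, of xi yi y])
         (use XiX XjX assms(4,10,11) yxi ne ab cd lp in \<open>auto simp: \<mu>_def R_def\<close>)
    then show False using good unfolding good_position_def by blast
  qed
qed

end
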